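(* Let $f:\mathbb{Z}^n\to\mathbb{R}\cup\{+\infty\}$ be an M-convex function with bounded $\operatorname{dom} f$, and $x_0\in\operatorname{dom} f$. Run algorithm M-SD from $x_0$ (with any choice of minimizing pair in each iteration), and let $x^*$ be its output. Then for every $i\in N$, along the sequence of iterates the component $x(i)$ is non-increasing if $x^*(i)\le x_0(i)$ and non-decreasing if $x^*(i)\ge x_0(i)$.
   Context: $N=\{1,\dots,n\}$; $\chi_i\in\{0,1\}^n$ is the $i$-th unit vector. For $f:\mathbb{Z}^n\to\mathbb{R}\cup\{+\infty\}$, $\operatorname{dom} f=\{x\in\mathbb{Z}^n: f(x)<+\infty\}$. $f$ is M-convex if $\operatorname{dom} f\neq\emptyset$ and for all $x,y\in\operatorname{dom} f$ and every $i$ with $x(i)>y(i)$ there is $j$ with $x(j)<y(j)$ such that $f(x)+f(y)\ge f(x-\chi_i+\chi_j)+f(y+\chi_i-\chi_j)$. For $x\in\operatorname{dom} f$ and $i,j\in N$, $f'(x;i,j)=f(x+\chi_i-\chi_j)-f(x)$ (possibly $+\infty$). Algorithm M-SD: set $x:=x_0$; repeatedly choose $i,j\in N$ minimizing $f'(x;i,j)$; if $f'(x;i,j)=0$ output $x$ and stop; otherwise set $x:=x+\chi_i-\chi_j$ and repeat. *)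

theory Defs
  imports Complex_Main "HOL-Library.Extended_Real"
begin

text \<open>The ground set N is modelled by a finite type 'a; points of Z^N are functions 'a => int.
  Functions with values in R \<union> {+\<infinity>} are modelled as ereal-valued functions never equal to -\<infinity>.\<close>

definition unitv :: "'a \<Rightarrow> 'a \<Rightarrow> int" where
  "unitv i = (\<lambda>k. if k = i then 1 else 0)"

definition vadd :: "('a \<Rightarrow> int) \<Rightarrow> ('a \<Rightarrow> int) \<Rightarrow> ('a \<Rightarrow> int)" where
  "vadd x y = (\<lambda>k. x k + y k)"

definition vsub :: "('a \<Rightarrow> int) \<Rightarrow> ('a \<Rightarrow> int) \<Rightarrow> ('a \<Rightarrow> int)" where
  "vsub x y = (\<lambda>k. x k - y k)"

definition dom_f :: "(('a \<Rightarrow> int) \<Rightarrow> ereal) \<Rightarrow> ('a \<Rightarrow> int) set" where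
  "dom_f f = {x. f x < \<infinity>}"

definition M_convex :: "(('a \<Rightarrow> int) \<Rightarrow> ereal) \<Rightarrow> bool" where
  "M_convex f \<longleftrightarrow> dom_f f \<noteq> {} \<and>
     (\<forall>x\<in>dom_f f. \<forall>y\<in>dom_f f. \<forall>i. x i > y i \<longrightarrow>
        (\<exists>j. x j < y j \<and>
           f x + f y \<ge> f (vadd (vsub x (unitv i)) (unitv j)) + f (vsub (vadd y (unitv i)) (unitv j))))"

definition dirder :: "(('a \<Rightarrow> int) \<Rightarrow> ereal) \<Rightarrow> ('a \<Rightarrow> int) \<Rightarrow> 'a \<Rightarrow> 'a \<Rightarrow> ereal" where
  "dirder f x i j = f (vsub (vadd x (unitv i)) (unitv j)) - f x"

definition MSD_step :: "(('a \<Rightarrow> int) \<Rightarrow> ereal) \<Rightarrow> ('a \<Rightarrow> int) \<Rightarrow> ('a \<Rightarrow> int) \<Rightarrow> bool" where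
  "MSD_step f x y \<longleftrightarrow> (\<exists>i j. (\<forall>p q. dirder f x i j \<le> dirder f x p q) \<and>
       dirder f x i j \<noteq> 0 \<and> y = vsub (vadd x (unitv i)) (unitv j))"

definition MSD_stop :: "(('a \<Rightarrow> int) \<Rightarrow> ereal) \<Rightarrow> ('a \<Rightarrow> int) \<Rightarrow> bool" where
  "MSD_stop f x \<longleftrightarrow> (\<exists>i j. (\<forall>p q. dirder f x i j \<le> dirder f x p q) \<and> dirder f x i j = 0)"

definition MSD_run :: "(('a \<Rightarrow> int) \<Rightarrow> ereal) \<Rightarrow> ('a \<Rightarrow> int) \<Rightarrow> (nat \<Rightarrow> ('a \<Rightarrow> int)) \<Rightarrow> nat \<Rightarrow> bool" where
  "MSD_run f x0 xs m \<longleftrightarrow> xs 0 = x0 \<and> (\<forall>k<m. \<not> MSD_stop f (xs k) \<and> MSD_step f (xs k) (xs (Suc k)))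
     \<and> MSD_stop f (xs m)"

end

theory Submission
  imports Defs
begin

definition mv :: "('a \<Rightarrow> int) \<Rightarrow> 'a \<Rightarrow> 'a \<Rightarrow> ('a \<Rightarrow> int)" where
  "mv x s t = vsub (vadd x (unitv s)) (unitv t)"

lemma mv_app: "mv x s t k = x k + (if k = s then 1 else 0) - (if k = t then 1 else 0)"
  by (simp add: mv_def vsub_def vadd_def unitv_def)

lemma mv_alt: "vadd (vsub z (unitv a)) (unitv w) = mv z w a"
  by (auto simp: fun_eq_iff mv_app vsub_def vadd_def unitv_def)

lemma ereal_cancel:
  fixes a b c d :: ereal
  assumes "b \<noteq> \<infinity>" "b \<noteq> -\<infinity>" "c \<noteq> -\<infinity>" "d \<ge> b" "c + d \<le> a + b"
  shows "c \<le> a"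
  using assms by (cases a; cases b; cases c; cases d) auto

lemma exch:
  assumes mconv: "M_convex f" and x: "f x < \<infinity>" and z: "f z < \<infinity>" and gt: "z a > x a"
  shows "\<exists>w. z w < x w \<and> f (mv z w a) + f (mv x a w) \<le> f z + f x"
proof -
  have "x \<in> dom_f f" "z \<in> dom_f f" using x z by (auto simp: dom_f_def)
  then obtain w where "z w < x w" and
    "f z + f x \<ge> f (vadd (vsub z (unitv a)) (unitv w)) + f (vsub (vadd x (unitv a)) (unitv w))"
    using mconv gt unfolding M_convex_def by blast
  thus ?thesis by (auto simp: mv_alt mv_def)
qed

lemma A_pres:
  assumes mconv: "M_convex f" and noninf: "\<forall>x. f x \<noteq> -\<infinity>" and fx: "f x < \<infinity>"
    and A: "\<forall>t'. f (mv x a t') \<ge> f x"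
    and mn: "\<forall>p q. f (mv x p q) \<ge> f (mv x s t)" and dec: "f (mv x s t) < f x"
  shows "f (mv (mv x s t) a u) \<ge> f (mv x s t)"
proof (rule ccontr)
  let ?y = "mv x s t" let ?z = "mv ?y a u"
  assume c: "\<not> f ?z \<ge> f ?y"
  hence lt: "f ?z < f ?y" by auto
  have as: "a \<noteq> s" using A dec by (metis not_le)
  show False
  proof (cases "a = t")
    case True
    have "?z = mv x s u" using True by (auto simp: fun_eq_iff mv_app)
    thus False using mn lt by (metis not_le)
  next
    case at: False
    show False
    proof (cases "u = a")
      case True
      have "?z = ?y" using True by (auto simp: fun_eq_iff mv_app)
      thus False using lt by simp
    next
      case ua: False
      have zfin: "f ?z < \<infinity>" using lt by (metis ereal_less_PInfty less_trans not_less_iff_gr_or_eq  dec fx) 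
      have "?z a > x a" using as at ua by (simp add: mv_app)
      then obtain w where w: "?z w < x w" and ineq: "f (mv ?z w a) + f (mv x a w) \<le> f ?z + f x"
        using exch[OF mconv fx zfin] by blast
      have le: "f (mv ?z w a) \<le> f ?z"
        by (rule ereal_cancel[OF _ _ _ _ ineq]) (use fx noninf A in auto)
      have "w = t \<or> w = u" using w as at by (auto simp: mv_app split: if_splits)
      thus False
      proof
        assume "w = t"
        hence "mv ?z w a = mv x s u" using as at ua by (auto simp: fun_eq_iff mv_app)
        thus False using mn le lt by (metis not_le order_le_less_trans)
      next
        assume "w = u"
        hence "mv ?z w a = ?y" using as at ua by (auto simp: fun_eq_iff mv_app)
        thus False using le lt by simp
      qed
    qed
  qed
qed

lemma B_pres:
  assumes mconv: "M_convex f" and noninf: "\<forall>x. f x \<noteq> -\<infinity>" and fx: "f x < \<infinity>"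
    and B: "\<forall>s'. f (mv x s' b) \<ge> f x"
    and mn: "\<forall>p q. f (mv x p q) \<ge> f (mv x s t)" and dec: "f (mv x s t) < f x"
  shows "f (mv (mv x s t) u b) \<ge> f (mv x s t)"
proof (rule ccontr)
  let ?y = "mv x s t" let ?z = "mv ?y u b"
  assume c: "\<not> f ?z \<ge> f ?y"
  hence lt: "f ?z < f ?y" by auto
  have bt: "b \<noteq> t" using B dec by (metis not_le)
  show False
  proof (cases "b = s")
    case True
    have "?z = mv x u t" using True by (auto simp: fun_eq_iff mv_app)
    thus False using mn lt by (metis not_le)
  next
    case bs: False
    show False
    proof (cases "u = b")
      case True
      have "?z = ?y" using True by (auto simp: fun_eq_iff mv_app)
      thus False using lt by simp
    next
      case ub: False
      have zfin: "f ?z < \<infinity>" using lt by (metis ereal_less_PInfty less_trans not_less_iff_gr_or_eq  dec fx) 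
      have "x b > ?z b" using bs bt ub by (simp add: mv_app)
      then obtain w where w: "x w < ?z w" and ineq0: "f (mv x w b) + f (mv ?z b w) \<le> f x + f ?z"
        using exch[OF mconv zfin fx] by blast
      have ineq: "f (mv ?z b w) + f (mv x w b) \<le> f ?z + f x" using ineq0 by (simp add: add.commute)
      have le: "f (mv ?z b w) \<le> f ?z"
        by (rule ereal_cancel[OF _ _ _ _ ineq]) (use fx noninf B in auto)
      have "w = s \<or> w = u" using w bs bt by (auto simp: mv_app split: if_splits)
      thus False
      proof
        assume "w = s"
        hence "mv ?z b w = mv x u t" using bs bt ub by (auto simp: fun_eq_iff mv_app)
        thus False using mn le lt by (metis not_le order_le_less_trans)
      next
        assume "w = u"
        hence "mv ?z b w = ?y" using bs bt ub by (auto simp: fun_eq_iff mv_app)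
        thus False using le lt by simp
      qed
    qed
  qed
qed

lemma A_new:
  assumes mn: "\<forall>p q. f (mv x p q) \<ge> f (mv x s t)"
  shows "f (mv (mv x s t) t u) \<ge> f (mv x s t)"
proof -
  have "mv (mv x s t) t u = mv x s u" by (auto simp: fun_eq_iff mv_app)
  thus ?thesis using mn by simp
qed

lemma B_new:
  assumes mn: "\<forall>p q. f (mv x p q) \<ge> f (mv x s t)"
  shows "f (mv (mv x s t) u s) \<ge> f (mv x s t)"
proof -
  have "mv (mv x s t) u s = mv x u t" by (auto simp: fun_eq_iff mv_app)
  thus ?thesis using mn by simp
qed

lemma step_facts:
  assumes noninf: "\<forall>x. f x \<noteq> -\<infinity>" and fx: "f x < \<infinity>"
    and st: "(\<forall>p q. dirder f x i j \<le> dirder f x p q) \<and> dirder f x i j \<noteq> 0"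
  shows "f (mv x i j) < f x" "\<forall>p q. f (mv x p q) \<ge> f (mv x i j)" "i \<noteq> j"
proof -
  have fxr: "\<bar>f x\<bar> \<noteq> \<infinity>" using fx noninf by auto
  have "mv x i i = x" by (auto simp: fun_eq_iff mv_app)
  hence d0: "dirder f x i i = 0" using fxr by (simp add: dirder_def mv_def[symmetric])
  have dl: "dirder f x i j < 0" using st d0 by (metis order_less_le)
  thus "f (mv x i j) < f x" using fxr noninf unfolding dirder_def mv_def[symmetric]
    by (cases "f x"; cases "f (mv x i j)") auto
  show "\<forall>p q. f (mv x p q) \<ge> f (mv x i j)"
  proof (intro allI)
    fix p q
    have "dirder f x i j \<le> dirder f x p q" using st by blast
    thus "f (mv x p q) \<ge> f (mv x i j)" using fxr noninf unfolding dirder_def mv_def[symmetric]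
      by (cases "f x"; cases "f (mv x i j)"; cases "f (mv x p q)") auto
  qed
  show "i \<noteq> j" using d0 dl by auto
qed


theorem mainTheorem7:
  fixes f :: "('a::finite \<Rightarrow> int) \<Rightarrow> ereal" and x0 :: "'a \<Rightarrow> int"
    and xs :: "nat \<Rightarrow> ('a \<Rightarrow> int)" and m :: nat
  assumes noninf: "\<forall>x. f x \<noteq> -\<infinity>"
    and mconv: "M_convex f"
    and bdd: "\<exists>B::int. \<forall>x\<in>dom_f f. \<forall>i. \<bar>x i\<bar> \<le> B"
    and x0: "x0 \<in> dom_f f"
    and run: "MSD_run f x0 xs m"
  shows "\<forall>i. (xs m i \<le> x0 i \<longrightarrow> (\<forall>k<m. xs (Suc k) i \<le> xs k i)) \<and>
             (xs m i \<ge> x0 i \<longrightarrow> (\<forall>k<m. xs k i \<le> xs (Suc k) i))"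
proof -
  have "\<forall>k. \<exists>i j. k < m \<longrightarrow> (\<forall>p q. dirder f (xs k) i j \<le> dirder f (xs k) p q) \<and>
       dirder f (xs k) i j \<noteq> 0 \<and> xs (Suc k) = mv (xs k) i j"
    using run unfolding MSD_run_def MSD_step_def mv_def by blast
  then obtain I J where IJ: "\<And>k. k < m \<Longrightarrow> (\<forall>p q. dirder f (xs k) (I k) (J k) \<le> dirder f (xs k) p q) \<and>
       dirder f (xs k) (I k) (J k) \<noteq> 0 \<and> xs (Suc k) = mv (xs k) (I k) (J k)"
    by metis
  have xs0: "xs 0 = x0" using run by (simp add: MSD_run_def)
  have inv: "l \<le> m \<longrightarrow> f (xs l) < \<infinity> \<and> (\<forall>k<l. (\<forall>t. f (mv (xs l) (J k) t) \<ge> f (xs l)) \<and>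
      (\<forall>s. f (mv (xs l) s (I k)) \<ge> f (xs l)))" for l
  proof (induction l)
    case 0
    then show ?case using x0 xs0 by (simp add: dom_f_def)
  next
    case (Suc l)
    show ?case
    proof
      assume lm: "Suc l \<le> m"
      hence lm': "l < m" by simp
      have IH: "f (xs l) < \<infinity>" "\<And>k. k < l \<Longrightarrow> (\<forall>t. f (mv (xs l) (J k) t) \<ge> f (xs l))"
        "\<And>k. k < l \<Longrightarrow> (\<forall>s. f (mv (xs l) s (I k)) \<ge> f (xs l))"
        using Suc lm by auto
      note st = IJ[OF lm']
      note sf = step_facts[OF noninf IH(1), of "I l" "J l"]
      have dec: "f (mv (xs l) (I l) (J l)) < f (xs l)" and
        mn: "\<forall>p q. f (mv (xs l) p q) \<ge> f (mv (xs l) (I l) (J l))"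
        using sf st by auto
      have xsS: "xs (Suc l) = mv (xs l) (I l) (J l)" using st by blast
      have fin: "f (xs (Suc l)) < \<infinity>" using dec IH(1) xsS by auto
      have "\<forall>k<Suc l. (\<forall>t. f (mv (xs (Suc l)) (J k) t) \<ge> f (xs (Suc l))) \<and>
      (\<forall>s. f (mv (xs (Suc l)) s (I k)) \<ge> f (xs (Suc l)))"
      proof (intro allI impI conjI)
        fix k t assume "k < Suc l"
        then consider "k < l" | "k = l" by linarith
        thus "f (mv (xs (Suc l)) (J k) t) \<ge> f (xs (Suc l))"
        proof cases
          case 1
          thus ?thesis using A_pres[OF mconv noninf IH(1) IH(2)[OF 1] mn dec] xsS by simp
        next
          case 2
          thus ?thesis using A_new[OF mn] xsS by simp
        qed
      next
        fix k s assume "k < Suc l"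
        then consider "k < l" | "k = l" by linarith
        thus "f (mv (xs (Suc l)) s (I k)) \<ge> f (xs (Suc l))"
        proof cases
          case 1
          thus ?thesis using B_pres[OF mconv noninf IH(1) IH(3)[OF 1] mn dec] xsS by simp
        next
          case 2
          thus ?thesis using B_new[OF mn] xsS by simp
        qed
      qed
      thus "f (xs (Suc l)) < \<infinity> \<and> (\<forall>k<Suc l. (\<forall>t. f (mv (xs (Suc l)) (J k) t) \<ge> f (xs (Suc l))) \<and>
      (\<forall>s. f (mv (xs (Suc l)) s (I k)) \<ge> f (xs (Suc l))))" using fin by blast
    qed
  qed
  have stepl: "l < m \<Longrightarrow> f (mv (xs l) (I l) (J l)) < f (xs l) \<and> I l \<noteq> J l \<and>
       xs (Suc l) = mv (xs l) (I l) (J l)" for l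
    using step_facts[OF noninf _ , of "xs l" "I l" "J l"] IJ[of l] inv[of l] by auto
  have nocross: "I l \<noteq> J k" if "l < m" "k < m" for k l
  proof -
    consider "k < l" | "l < k" | "k = l" by linarith
    thus ?thesis
    proof cases
      case 1
      thus ?thesis using inv[of l] stepl[of l] that by (metis less_imp_le not_le)
    next
      case 2
      thus ?thesis using inv[of k] stepl[of k] that by (metis less_imp_le not_le)
    next
      case 3
      thus ?thesis using stepl that by auto
    qed
  qed
  have coord: "xs (Suc k) a = xs k a + (if a = I k then 1 else 0) - (if a = J k then 1 else 0)"
    if "k < m" for k a using stepl[OF that] by (simp add: mv_app)
  show ?thesis
  proof (rule allI, intro conjI impI)
    fix a assume hm: "xs m a \<le> x0 a"
    show "\<forall>k<m. xs (Suc k) a \<le> xs k a"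
    proof (rule ccontr)
      assume "\<not> (\<forall>k<m. xs (Suc k) a \<le> xs k a)"
      then obtain k0 where k0: "k0 < m" "a = I k0" using coord by fastforce
      have nJ: "\<And>l. l < m \<Longrightarrow> a \<noteq> J l" using nocross k0 by metis
      have "n \<le> m \<longrightarrow> xs n a \<ge> x0 a + (if k0 < n then 1 else 0)" for n
      proof (induction n)
        case 0 thus ?case using xs0 by simp
      next
        case (Suc n)
        show ?case
        proof
          assume "Suc n \<le> m"
          hence nm: "n < m" by simp
          thus "xs (Suc n) a \<ge> x0 a + (if k0 < Suc n then 1 else 0)"
            using Suc coord[OF nm, of a] nJ[OF nm] k0 by (cases "n = k0") (auto split: if_splits)
        qed
      qed
      from this[of m] show False using hm k0 by simp
    qed
  next
    fix a assume hm: "xs m a \<ge> x0 a"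
    show "\<forall>k<m. xs k a \<le> xs (Suc k) a"
    proof (rule ccontr)
      assume "\<not> (\<forall>k<m. xs k a \<le> xs (Suc k) a)"
      then obtain k0 where k0: "k0 < m" "a = J k0" using coord by fastforce
      have nI: "\<And>l. l < m \<Longrightarrow> a \<noteq> I l" using nocross k0 by metis
      have "n \<le> m \<longrightarrow> xs n a \<le> x0 a - (if k0 < n then 1 else 0)" for n
      proof (induction n)
        case 0 thus ?case using xs0 by simp
      next
        case (Suc n)
        show ?case
        proof
          assume "Suc n \<le> m"
          hence nm: "n < m" by simp
          thus "xs (Suc n) a \<le> x0 a - (if k0 < Suc n then 1 else 0)"
            using Suc coord[OF nm, of a] nI[OF nm] k0 by (cases "n = k0") (auto split: if_splits)
        qed
      qed
      from this[of m] show False using hm k0 by simp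
    qed
  qed
qed

end
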